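(* Let $\emptyset\neq H\subset\mathbb R^n$, let $A\colon[0,\infty)\to\mathbb R^{n\times n}$ and $f\colon[0,\infty)\times\mathbb R^n\to\mathbb R^n$ be continuous, and suppose that the linear equation $x'=A(t)x$ has an exponential dichotomy on $[0,\infty)$ with constants $N,\lambda>0$. Suppose there exist $\delta,L>0$ such that $$|f(t,x_1)-f(t,x_2)|\le L|x_1-x_2|\quad\text{for all }t\ge0\text{ and }x_1,x_2\in\mathcal N_\delta(H).$$ If $L<\dfrac{\lambda}{2N}$, then the equation $x'=A(t)x+f(t,x)$ has the conditional Lipschitz shadowing property in $H$.
   Context: $|\cdot|$ is a fixed norm on $\mathbb R^n$ and also denotes the induced matrix norm on $\mathbb R^{n\times n}$. For $x\in\mathbb R^n$ and $\delta>0$, $B_\delta(x)=\{y\in\mathbb R^n:|y-x|\le\delta\}$, and for $\emptyset\ne H\subset\mathbb R^n$, $\mathcal N_\delta(H)=\bigcup_{x\in H}B_\delta(x)$. For a continuous $g\colon[0,\infty)\times\mathbb R^n\to\mathbb R^n$ consider $x'=g(t,x)$. Given $\tau\in(0,\infty]$, a pseudosolution of this equation on $[0,\tau)$ is a continuously differentiable $y\colon[0,\tau)\to\mathbb R^n$ such that $\sigma_y:=\sup_{0\le t<\tau}|y'(t)-g(t,y(t))|<\infty$; $\sigma_y$ is its maximum error. For $\emptyset\ne H\subset\mathbb R^n$, the equation has the conditional Lipschitz shadowing property in $H$ if there exist $\varepsilon_0>0$ and $\kappa>0$ such that: whenever $0<\varepsilon\le\varepsilon_0$ and $y$ is a pseudosolution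 on $[0,\tau)$ for some $\tau\in(0,\infty]$ with $\sigma_y\le\varepsilon$ and $y(t)\in H$ for all $t\in[0,\tau)$, there is a solution $x$ of the equation defined on $[0,\tau)$ with $\sup_{0\le t<\tau}|x(t)-y(t)|\le\kappa\varepsilon$. Let $T(t,s)=\Phi(t)\Phi(s)^{-1}$ be the transition matrix of $x'=A(t)x$ ($\Phi$ a fundamental matrix). This equation has an exponential dichotomy on $[0,\infty)$ if there exist projections $P(t)\in\mathbb R^{n\times n}$, $t\ge0$, and constants $N,\lambda>0$ with $P(t)T(t,s)=T(t,s)P(s)$ for all $t,s\ge0$, $|T(t,s)P(s)|\le Ne^{-\lambda(t-s)}$ for $t\ge s\ge0$, and $|T(t,s)(I-P(s))|\le Ne^{-\lambda(s-t)}$ for $0\le t\le s$. *)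

theory Defs
  imports "HOL-Analysis.Analysis"
begin

definition is_norm :: "(real^'n \<Rightarrow> real) \<Rightarrow> bool" where
  "is_norm nrm \<longleftrightarrow> (\<forall>x. 0 \<le> nrm x) \<and> (\<forall>x. nrm x = 0 \<longleftrightarrow> x = 0)
     \<and> (\<forall>c x. nrm (c *\<^sub>R x) = \<bar>c\<bar> * nrm x)
     \<and> (\<forall>x y. nrm (x + y) \<le> nrm x + nrm y)"

definition mat_norm :: "(real^'n \<Rightarrow> real) \<Rightarrow> real^'n^'n \<Rightarrow> real" where
  "mat_norm nrm M = (SUP x\<in>{x. nrm x \<le> 1}. nrm (M *v x))"

definition closed_ball_n :: "(real^'n \<Rightarrow> real) \<Rightarrow> real^'n \<Rightarrow> real \<Rightarrow> (real^'n) set" where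
  "closed_ball_n nrm x \<delta> = {y. nrm (y - x) \<le> \<delta>}"

definition nbhd_n :: "(real^'n \<Rightarrow> real) \<Rightarrow> real \<Rightarrow> (real^'n) set \<Rightarrow> (real^'n) set" where
  "nbhd_n nrm \<delta> H = (\<Union>x\<in>H. closed_ball_n nrm x \<delta>)"

definition Itau :: "ereal \<Rightarrow> real set" where
  "Itau \<tau> = {t. 0 \<le> t \<and> ereal t < \<tau>}"

definition pseudosol_le ::
  "(real^'n \<Rightarrow> real) \<Rightarrow> (real \<Rightarrow> real^'n \<Rightarrow> real^'n) \<Rightarrow> ereal \<Rightarrow> (real \<Rightarrow> real^'n) \<Rightarrow> real \<Rightarrow> bool" where
  "pseudosol_le nrm g \<tau> y \<epsilon> \<longleftrightarrow>
     (\<exists>y'. (\<forall>t\<in>Itau \<tau>. (y has_vector_derivative y' t) (at t within Itau \<tau>))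
        \<and> continuous_on (Itau \<tau>) y'
        \<and> (\<forall>t\<in>Itau \<tau>. nrm (y' t - g t (y t)) \<le> \<epsilon>))"

definition is_solution_on ::
  "(real \<Rightarrow> real^'n \<Rightarrow> real^'n) \<Rightarrow> ereal \<Rightarrow> (real \<Rightarrow> real^'n) \<Rightarrow> bool" where
  "is_solution_on g \<tau> x \<longleftrightarrow>
     (\<forall>t\<in>Itau \<tau>. (x has_vector_derivative g t (x t)) (at t within Itau \<tau>))"

definition cond_lipschitz_shadowing ::
  "(real^'n \<Rightarrow> real) \<Rightarrow> (real \<Rightarrow> real^'n \<Rightarrow> real^'n) \<Rightarrow> (real^'n) set \<Rightarrow> bool" where
  "cond_lipschitz_shadowing nrm g H \<longleftrightarrow>
     (\<exists>\<epsilon>0>0. \<exists>\<kappa>>0. \<forall>\<epsilon> \<tau> y. 0 < \<epsilon> \<longrightarrow> \<epsilon> \<le> \<epsilon>0 \<longrightarrow> 0 < \<tau> \<longrightarrow>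
        pseudosol_le nrm g \<tau> y \<epsilon> \<longrightarrow> (\<forall>t\<in>Itau \<tau>. y t \<in> H) \<longrightarrow>
        (\<exists>x. is_solution_on g \<tau> x \<and> (\<forall>t\<in>Itau \<tau>. nrm (x t - y t) \<le> \<kappa> * \<epsilon>)))"

definition fundamental_matrix :: "(real \<Rightarrow> real^'n^'n) \<Rightarrow> (real \<Rightarrow> real^'n^'n) \<Rightarrow> bool" where
  "fundamental_matrix A \<Phi> \<longleftrightarrow>
     (\<forall>t\<ge>0. (\<Phi> has_vector_derivative (A t ** \<Phi> t)) (at t within {0..}) \<and> invertible (\<Phi> t))"

definition exp_dichotomy ::
  "(real^'n \<Rightarrow> real) \<Rightarrow> (real \<Rightarrow> real^'n^'n) \<Rightarrow> real \<Rightarrow> real \<Rightarrow> bool" where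
  "exp_dichotomy nrm A N lam \<longleftrightarrow> 0 < N \<and> 0 < lam \<and>
     (\<exists>\<Phi> P. fundamental_matrix A \<Phi> \<and>
       (let T = (\<lambda>t s. \<Phi> t ** matrix_inv (\<Phi> s)) in
        (\<forall>t\<ge>0. P t ** P t = P t) \<and>
        (\<forall>t\<ge>0. \<forall>s\<ge>0. P t ** T t s = T t s ** P s) \<and>
        (\<forall>t s. 0 \<le> s \<and> s \<le> t \<longrightarrow> mat_norm nrm (T t s ** P s) \<le> N * exp (- lam * (t - s))) \<and>
        (\<forall>t s. 0 \<le> t \<and> t \<le> s \<longrightarrow> mat_norm nrm (T t s ** (mat 1 - P s)) \<le> N * exp (- lam * (s - t)))))"

end

theory Submission
  imports Defs
begin

lemma nrm_basic:
  assumes "is_norm nrm"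
  shows "nrm 0 = 0" "nrm (-x) = nrm x" "nrm (x - y) = nrm (y - x)" "0 \<le> nrm x"
    "nrm (x + y) \<le> nrm x + nrm y" "nrm (c *\<^sub>R x) = \<bar>c\<bar> * nrm x"
    "nrm x = 0 \<longleftrightarrow> x = 0"
proof -
  have h: "nrm (c *\<^sub>R x) = \<bar>c\<bar> * nrm x" for c x using assms unfolding is_norm_def by blast
  have z: "nrm x = 0 \<longleftrightarrow> x = 0" for x using assms unfolding is_norm_def by blast
  show "nrm (-x) = nrm x" using h[of "-1" x] by simp
  show "nrm (x - y) = nrm (y - x)" using h[of "-1" "x-y"] by simp
  show "nrm 0 = 0" using z by simp
  show "0 \<le> nrm x" "nrm (x + y) \<le> nrm x + nrm y" "nrm (c *\<^sub>R x) = \<bar>c\<bar> * nrm x"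
      "nrm x = 0 \<longleftrightarrow> x = 0"
    using assms unfolding is_norm_def by blast+
qed

lemma nrm_sum_le:
  assumes "is_norm nrm" "finite S"
  shows "nrm (sum g S) \<le> sum (\<lambda>i. nrm (g i)) S"
  using assms(2)
proof (induction S rule: finite_induct)
  case empty then show ?case using nrm_basic(1)[OF assms(1)] by simp
next
  case (insert x F)
  then show ?case using nrm_basic(5)[OF assms(1), of "g x" "sum g F"] by simp
qed

lemma nrm_upper:
  fixes nrm :: "real^'n \<Rightarrow> real"
  assumes "is_norm nrm"
  obtains c where "c > 0" "\<And>x. nrm x \<le> c * norm x"
proof -
  define c where "c = 1 + (\<Sum>i\<in>UNIV. nrm (axis i (1::real)))"
  have c0: "(\<Sum>i\<in>UNIV. nrm (axis i (1::real))) \<ge> 0"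
    by (rule sum_nonneg) (use nrm_basic(4)[OF assms] in auto)
  have "nrm x \<le> c * norm x" for x
  proof -
    have "x = (\<Sum>i\<in>UNIV. x$i *\<^sub>R axis i 1)"
      using basis_expansion[of x] by (simp add: scalar_mult_eq_scaleR)
    then have "nrm x = nrm (\<Sum>i\<in>UNIV. x$i *\<^sub>R axis i 1)" by simp
    also have "\<dots> \<le> (\<Sum>i\<in>UNIV. nrm (x$i *\<^sub>R axis i 1))"
      by (rule nrm_sum_le[OF assms finite])
    also have "\<dots> = (\<Sum>i\<in>UNIV. \<bar>x$i\<bar> * nrm (axis i 1))"
      using nrm_basic(6)[OF assms] by simp
    also have "\<dots> \<le> (\<Sum>i\<in>UNIV. norm x * nrm (axis i 1))"
      by (rule sum_mono, rule mult_right_mono) (auto simp: component_le_norm_cart nrm_basic(4)[OF assms])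
    also have "\<dots> \<le> c * norm x" using c0 by (simp add: c_def sum_distrib_left[symmetric] algebra_simps)
    finally show ?thesis .
  qed
  moreover have "c > 0" using c0 by (simp add: c_def)
  ultimately show ?thesis using that by blast
qed

lemma nrm_lipschitz:
  fixes nrm :: "real^'n \<Rightarrow> real"
  assumes "is_norm nrm"
  shows "continuous_on S nrm"
proof -
  obtain c where c: "c > 0" "\<And>x. nrm x \<le> c * norm x" using nrm_upper[OF assms] by blast
  have *: "\<bar>nrm x - nrm y\<bar> \<le> c * norm (x - y)" for x y
    using nrm_basic(5)[OF assms, of "x - y" y] nrm_basic(5)[OF assms, of "y - x" x] c(2)[of "x - y"]
      c(2)[of "y - x"] by (simp add: norm_minus_commute)
  have "continuous_on UNIV nrm"
    unfolding continuous_on_iff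
  proof (intro ballI allI impI)
    fix x :: "real^'n" and e :: real assume "0 < e"
    show "\<exists>d>0. \<forall>x'\<in>UNIV. dist x' x < d \<longrightarrow> dist (nrm x') (nrm x) < e"
    proof (intro exI[of _ "e / c"] conjI ballI impI)
      show "0 < e / c" using \<open>0 < e\<close> c(1) by simp
      fix x' assume "dist x' x < e / c"
      then have "c * norm (x' - x) < e" using c(1) by (simp add: dist_norm field_simps)
      then show "dist (nrm x') (nrm x) < e" using *[of x' x]
        by (simp add: dist_real_def)
    qed
  qed
  then show ?thesis using continuous_on_subset by blast
qed

lemma nrm_lower:
  fixes nrm :: "real^'n \<Rightarrow> real"
  assumes "is_norm nrm"
  obtains C where "C > 0" "\<And>x. norm x \<le> C * nrm x"
proof -
  have "compact (sphere (0::real^'n) 1)" by simp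
  moreover have "sphere (0::real^'n) 1 \<noteq> {}"
  proof -
    have "axis undefined (1::real) \<in> sphere (0::real^'n) 1" by simp
    then show ?thesis by blast
  qed
  ultimately have "\<exists>x\<in>sphere 0 1. \<forall>y\<in>sphere 0 1. nrm x \<le> nrm y"
    by (intro continuous_attains_inf nrm_lipschitz[OF assms])
  then obtain x0 where x0: "x0 \<in> sphere 0 1" "\<And>y. y \<in> sphere 0 1 \<Longrightarrow> nrm x0 \<le> nrm y"
    by auto
  have m: "nrm x0 > 0" using x0(1) nrm_basic(4,7)[OF assms, of x0] by fastforce
  have "norm x \<le> (1 / nrm x0) * nrm x" for x
  proof (cases "x = 0")
    case False
    then have "(1/norm x) *\<^sub>R x \<in> sphere 0 1" by simp
    then have "nrm x0 \<le> nrm ((1/norm x) *\<^sub>R x)" by (rule x0(2))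
    then have "nrm x0 \<le> nrm x / norm x" using nrm_basic(6)[OF assms] by simp
    then show ?thesis using m False by (simp add: field_simps)
  qed (simp add: nrm_basic[OF assms])
  moreover have "1 / nrm x0 > 0" using m by simp
  ultimately show ?thesis using that by blast
qed


lemma matrix_inv_props:
  fixes M :: "real^'n^'n"
  assumes "invertible M"
  shows "M ** matrix_inv M = mat 1" "matrix_inv M ** M = mat 1"
proof -
  have "\<exists>A'. M ** A' = mat 1 \<and> A' ** M = mat 1" using assms unfolding invertible_def by blast
  then have "M ** matrix_inv M = mat 1 \<and> matrix_inv M ** M = mat 1"
    unfolding matrix_inv_def by (rule someI_ex)
  then show "M ** matrix_inv M = mat 1" "matrix_inv M ** M = mat 1" by auto
qed

lemma mv_norm_bound:
  fixes M :: "real^'n^'m"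
  shows "norm (M *v x) \<le> norm M * norm x * (real CARD('m) * real CARD('n))"
proof -
  have "norm (M *v x) \<le> onorm ((*v) M) * norm x"
    by (rule onorm) simp
  also have "onorm ((*v) M) \<le> (\<Sum>i\<in>UNIV. \<Sum>j\<in>UNIV. \<bar>M $ i $ j\<bar>)"
    by (rule onorm_le_matrix_component_sum)
  also have "\<dots> \<le> (\<Sum>i\<in>(UNIV::'m set). \<Sum>j\<in>(UNIV::'n set). norm M)"
  proof (intro sum_mono)
    fix i j
    have "\<bar>M $ i $ j\<bar> \<le> norm (M $ i)" by (rule component_le_norm_cart)
    also have "\<dots> \<le> norm M" by (rule Finite_Cartesian_Product.norm_nth_le)
    finally show "\<bar>M $ i $ j\<bar> \<le> norm M" .
  qed
  finally have "norm (M *v x) \<le> (real CARD('m) * real CARD('n) * norm M) * norm x"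
    by (simp add: mult_right_mono)
  then show ?thesis by (simp add: algebra_simps)
qed

lemma bounded_bilinear_mv: "bounded_bilinear (\<lambda>(M::real^'n^'m) x. M *v x)"
proof (rule bounded_bilinear.intro)
  show "\<exists>K. \<forall>a b. norm ((a::real^'n^'m) *v b) \<le> norm a * norm b * K"
    using mv_norm_bound by blast
qed (auto simp: algebra_simps matrix_vector_mult_scaleR scaleR_matrix_vector_assoc matrix_vector_right_distrib
   matrix_vector_mult_add_rdistrib)

lemma mat_norm_bound:
  fixes nrm :: "real^'n \<Rightarrow> real"
  assumes "is_norm nrm"
  shows "nrm (M *v x) \<le> mat_norm nrm M * nrm x"
proof -
  obtain c where c: "c > 0" "\<And>x. nrm x \<le> c * norm x" using nrm_upper[OF assms] by blast
  obtain C where C: "C > 0" "\<And>x. norm x \<le> C * nrm x" using nrm_lower[OF assms] by blast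
  obtain K where K: "\<And>x. norm (M *v x) \<le> norm x * K"
    using bounded_linear.bounded[OF matrix_vector_mul_bounded_linear[of M]] by blast
  have bdd: "bdd_above ((\<lambda>x. nrm (M *v x)) ` {x. nrm x \<le> 1})"
  proof (rule bdd_aboveI2)
    fix x :: "real^'n" assume "x \<in> {x. nrm x \<le> 1}"
    then have "nrm x \<le> 1" by simp
    have "nrm (M *v x) \<le> c * (norm x * K)" using c(2)[of "M *v x"] K[of x] c(1)
      by (meson mult_left_mono less_imp_le order_trans)
    also have "\<dots> \<le> c * (C * \<bar>K\<bar>)"
    proof -
      have "C * nrm x \<le> C" using C(1) \<open>nrm x \<le> 1\<close> by (simp add: mult_left_le)
      then have nx: "norm x \<le> C" using C(2)[of x] by linarith
      have "norm x * K \<le> norm x * \<bar>K\<bar>" by (simp add: mult_left_mono)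
      also have "\<dots> \<le> C * \<bar>K\<bar>" using nx by (simp add: mult_right_mono)
      finally have "norm x * K \<le> C * \<bar>K\<bar>" .
      then show ?thesis using c(1) by simp
    qed
    finally show "nrm (M *v x) \<le> c * (C * \<bar>K\<bar>)" .
  qed
  show ?thesis
  proof (cases "x = 0")
    case True then show ?thesis using nrm_basic(1)[OF assms] by simp
  next
    case False
    then have p: "nrm x > 0" using nrm_basic(4,7)[OF assms, of x] by fastforce
    let ?u = "(1 / nrm x) *\<^sub>R x"
    have "nrm ?u = 1" using p nrm_basic(6)[OF assms] by simp
    then have "nrm (M *v ?u) \<le> mat_norm nrm M"
      unfolding mat_norm_def by (intro cSUP_upper bdd) simp
    moreover have "nrm (M *v ?u) = nrm (M *v x) / nrm x"
      using p nrm_basic(6)[OF assms] by (simp add: matrix_vector_mult_scaleR)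
    ultimately show ?thesis using p by (simp add: field_simps)
  qed
qed

lemma nrm_support:
  fixes nrm :: "real^'n \<Rightarrow> real"
  assumes "is_norm nrm"
  shows "\<exists>w. w \<bullet> v = nrm v \<and> (\<forall>u. w \<bullet> u \<le> nrm u)"
proof (cases "v = 0")
  case True then show ?thesis using nrm_basic(1,4)[OF assms] by (intro exI[of _ 0]) auto
next
  case False
  then have p: "nrm v > 0" using nrm_basic(4,7)[OF assms, of v] by fastforce
  define S where "S = {u. nrm u < nrm v}"
  have cS: "convex S" unfolding S_def convex_def
  proof (intro allI impI ballI, clarsimp)
    fix x y :: "real^'n" and a b :: real
    assume xy: "nrm x < nrm v" "nrm y < nrm v" "0 \<le> a" "0 \<le> b" "a + b = 1"
    have "nrm (a *\<^sub>R x + b *\<^sub>R y) \<le> a * nrm x + b * nrm y"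
      using nrm_basic(5,6)[OF assms] xy(3,4) by (metis abs_of_nonneg)
    also have "\<dots> < nrm v"
    proof (cases "a = 0")
      case True then show ?thesis using xy by simp
    next
      case False
      then have "a * nrm x < a * nrm v" using xy by simp
      moreover have "b * nrm y \<le> b * nrm v" using xy by (simp add: mult_left_mono)
      moreover have "a * nrm v + b * nrm v = nrm v" using xy(5) by (metis distrib_right mult_1)
      ultimately show ?thesis by linarith
    qed
    finally show "nrm (a *\<^sub>R x + b *\<^sub>R y) < nrm v" .
  qed
  have "0 \<in> S" using p nrm_basic(1)[OF assms] by (simp add: S_def)
  moreover have "S \<inter> {v} = {}" by (simp add: S_def)
  ultimately obtain a b where ab: "a \<noteq> 0" "\<forall>x\<in>S. a \<bullet> x \<le> b" "\<forall>x\<in>{v}. a \<bullet> x \<ge> b"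
    using separating_hyperplane_sets[OF cS convex_singleton, of v] by blast
  have b0: "0 \<le> b" using ab(2) \<open>0 \<in> S\<close> by force
  have key: "(a \<bullet> u) * nrm v \<le> (a \<bullet> v) * nrm u" for u
  proof (cases "u = 0")
    case True then show ?thesis using nrm_basic(1)[OF assms] by simp
  next
    case False
    then have pu: "nrm u > 0" using nrm_basic(4,7)[OF assms, of u] by fastforce
    have "(nrm v / nrm u) * (a \<bullet> u) \<le> a \<bullet> v"
    proof (rule field_le_mult_one_interval)
      fix z :: real assume z: "0 < z" "z < 1"
      have "nrm ((z * nrm v / nrm u) *\<^sub>R u) = z * nrm v"
        using nrm_basic(6)[OF assms] z pu p by simp
      then have "(z * nrm v / nrm u) *\<^sub>R u \<in> S" using z p by (simp add: S_def)
      then have "a \<bullet> ((z * nrm v / nrm u) *\<^sub>R u) \<le> a \<bullet> v" using ab(2,3) by fastforce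
      then show "z * (nrm v / nrm u * (a \<bullet> u)) \<le> a \<bullet> v" by (simp add: algebra_simps)
    qed
    then show ?thesis using pu by (simp add: field_simps)
  qed
  have av: "a \<bullet> v > 0"
  proof (rule ccontr)
    assume "\<not> a \<bullet> v > 0"
    moreover have "a \<bullet> v \<ge> 0" using ab(3) b0 by auto
    ultimately have "a \<bullet> v = 0" by simp
    then have "(a \<bullet> a) * nrm v \<le> 0" using key[of a] by simp
    then have "a \<bullet> a \<le> 0" using p by (simp add: mult_le_0_iff)
    then show False using ab(1) inner_gt_zero_iff[of a] by linarith
  qed
  define w where "w = (nrm v / (a \<bullet> v)) *\<^sub>R a"
  have "w \<bullet> v = nrm v" using av by (simp add: w_def)
  moreover have "w \<bullet> u \<le> nrm u" for u
  proof -
    have "w \<bullet> u = (a \<bullet> u) * nrm v / (a \<bullet> v)" by (simp add: w_def)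
    also have "\<dots> \<le> nrm u" using key[of u] av by (simp add: divide_le_eq mult.commute)
    finally show ?thesis .
  qed
  ultimately show ?thesis by blast
qed

lemma nrm_integral_le:
  fixes nrm :: "real^'n \<Rightarrow> real" and g :: "real \<Rightarrow> real^'n"
  assumes "is_norm nrm" "g integrable_on U" "(\<lambda>s. nrm (g s)) integrable_on U"
  shows "nrm (integral U g) \<le> integral U (\<lambda>s. nrm (g s))"
proof -
  obtain w where w: "w \<bullet> integral U g = nrm (integral U g)" "\<And>u. w \<bullet> u \<le> nrm u"
    using nrm_support[OF assms(1)] by blast
  have bl: "bounded_linear (\<lambda>u. w \<bullet> u)" by (rule bounded_linear_inner_right)
  have "nrm (integral U g) = integral U ((\<lambda>u. w \<bullet> u) \<circ> g)"
    using integral_linear[OF assms(2) bl] w(1) by simp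
  also have "\<dots> \<le> integral U (\<lambda>s. nrm (g s))"
    using integrable_linear[OF assms(2) bl] assms(3) w(2) by (intro integral_le) auto
  finally show ?thesis .
qed


lemma Itau_cases:
  assumes "0 < \<tau>"
  shows "(\<exists>r>0. \<tau> = ereal r \<and> Itau \<tau> = {0..<r}) \<or> (\<tau> = \<infinity> \<and> Itau \<tau> = {0..})"
  using assms by (cases \<tau>) (auto simp: Itau_def)

lemma Itau_sets: "0 < \<tau> \<Longrightarrow> Itau \<tau> \<in> sets lebesgue"
  using Itau_cases[of \<tau>] by auto

lemma Itau_0: "0 < \<tau> \<Longrightarrow> 0 \<in> Itau \<tau>"
  using Itau_cases[of \<tau>] by auto

lemma Itau_nonneg: "Itau \<tau> \<subseteq> {0..}"
  by (auto simp: Itau_def)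

lemma Itau_down: "t \<in> Itau \<tau> \<Longrightarrow> 0 \<le> s \<Longrightarrow> s \<le> t \<Longrightarrow> s \<in> Itau \<tau>"
  by (auto simp: Itau_def) (meson ereal_less_eq(3) order_le_less_trans)

lemma Itau_right:
  assumes "0 < \<tau>" "t \<in> Itau \<tau>"
  shows "\<exists>b>t. {0..b} \<subseteq> Itau \<tau>"
  using Itau_cases[OF assms(1)]
proof (elim disjE exE conjE)
  fix r :: real assume r: "0 < r" "\<tau> = ereal r" "Itau \<tau> = {0..<r}"
  show ?thesis using assms(2) r by (intro exI[of _ "(t + r)/2"]) auto
next
  assume r: "\<tau> = \<infinity>" "Itau \<tau> = {0..}"
  show ?thesis using assms(2) r by (intro exI[of _ "t + 1"]) auto
qed

lemma continuous_on_det: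
  fixes M :: "real \<Rightarrow> real^'n^'n"
  assumes "continuous_on U M"
  shows "continuous_on U (\<lambda>s. det (M s))"
  unfolding det_def
  by (intro continuous_intros continuous_on_component assms)

lemma inv_mv_eq:
  fixes M :: "real^'n^'n"
  assumes "invertible M"
  shows "matrix_inv M *v v = (\<chi> k. det(\<chi> i j. if j=k then v$i else M$i$j) / det M)"
proof -
  have d: "det M \<noteq> 0" using assms invertible_det_nz by blast
  have "M *v (matrix_inv M *v v) = v"
    using matrix_inv_props(1)[OF assms] by (simp add: matrix_vector_mul_assoc)
  then show ?thesis using cramer[OF d] by blast
qed

lemma continuous_on_inv_mv:
  fixes M :: "real \<Rightarrow> real^'n^'n"
  assumes "continuous_on U M" "\<And>s. s \<in> U \<Longrightarrow> invertible (M s)" "continuous_on U v"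
  shows "continuous_on U (\<lambda>s. matrix_inv (M s) *v v s)"
proof -
  have dM: "continuous_on U (\<lambda>s. det (M s))" by (rule continuous_on_det[OF assms(1)])
  have nk: "continuous_on U (\<lambda>s. det(\<chi> i j. if j=k then v s$i else M s$i$j))" for k
  proof (rule continuous_on_det)
    show "continuous_on U (\<lambda>s. \<chi> i j. if j = k then v s $ i else M s $ i $ j)"
    proof (intro continuous_on_vec_lambda)
      fix i j
      show "continuous_on U (\<lambda>x. if j = k then v x $ i else M x $ i $ j)"
        by (cases "j = k") (auto intro!: continuous_on_component assms)
    qed
  qed
  have nz: "\<forall>x\<in>U. det (M x) \<noteq> 0" using assms(2) invertible_det_nz by blast
  have "continuous_on U (\<lambda>s. (\<chi> k. det(\<chi> i j. if j=k then v s$i else M s$i$j) / det (M s)))"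
    by (intro continuous_on_vec_lambda continuous_on_divide nk dM nz)
  then show ?thesis
    by (rule continuous_on_cong[THEN iffD1, rotated 2]) (auto simp: inv_mv_eq assms(2))
qed

lemma integrable_exp_bound:
  fixes f :: "real \<Rightarrow> 'b::euclidean_space"
  assumes "continuous_on U f" "U \<in> sets lebesgue" "U \<subseteq> {a..}" "0 < lam" "0 \<le> B"
    "\<And>s. s \<in> U \<Longrightarrow> norm (f s) \<le> B * exp (- lam * s)"
  shows "f integrable_on U"
proof -
  have "((\<lambda>x::real. exp (-lam*x)) has_integral exp (-lam*a)/lam) {a..}"
    by (rule has_integral_exp_minus_to_infinity) (rule assms)
  then have "(\<lambda>x::real. exp (-lam*x)) integrable_on {a..}" by blast
  then have "(\<lambda>x::real. exp (-lam*x)) absolutely_integrable_on {a..}"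
    by (intro nonnegative_absolutely_integrable_1) auto
  then have "(\<lambda>x::real. exp (-lam*x)) absolutely_integrable_on U"
    by (rule set_integrable_subset) (use assms in auto)
  then have "(\<lambda>x::real. B * exp (-lam*x)) absolutely_integrable_on U"
    by (rule set_integrable_mult_right)
  then have g: "(\<lambda>x::real. B * exp (-lam*x)) integrable_on U"
    using set_lebesgue_integral_eq_integral(1) by blast
  have "f absolutely_integrable_on U"
    by (rule measurable_bounded_by_integrable_imp_absolutely_integrable[OF
          continuous_imp_measurable_on_sets_lebesgue[OF assms(1,2)] assms(2) g assms(6)])
  then show ?thesis using set_lebesgue_integral_eq_integral(1) by blast
qed


lemma cont_mv_const:
  fixes M :: "real^'n^'m"
  assumes "continuous_on U f"
  shows "continuous_on U (\<lambda>s. M *v f s)"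
  using bounded_linear.continuous_on[OF matrix_vector_mul_bounded_linear[of M] assms] by simp

lemma cont_nrm_comp:
  fixes nrm :: "real^'n \<Rightarrow> real"
  assumes "is_norm nrm" "continuous_on U f"
  shows "continuous_on U (\<lambda>s. nrm (f s))"
  using continuous_on_compose[OF assms(2) nrm_lipschitz[OF assms(1)]] by (simp add: o_def)

locale dich =
  fixes nrm :: "real^'n \<Rightarrow> real" and A :: "real \<Rightarrow> real^'n^'n"
    and \<Phi> P :: "real \<Rightarrow> real^'n^'n" and N lam :: real and \<tau> :: ereal
  assumes nrm: "is_norm nrm"
    and fm: "fundamental_matrix A \<Phi>"
    and comm: "\<forall>t\<ge>0. \<forall>s\<ge>0. P t ** (\<Phi> t ** matrix_inv (\<Phi> s)) = (\<Phi> t ** matrix_inv (\<Phi> s)) ** P s"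
    and bd1: "\<forall>t s. 0 \<le> s \<and> s \<le> t \<longrightarrow> mat_norm nrm ((\<Phi> t ** matrix_inv (\<Phi> s)) ** P s) \<le> N * exp (- lam * (t - s))"
    and bd2: "\<forall>t s. 0 \<le> t \<and> t \<le> s \<longrightarrow> mat_norm nrm ((\<Phi> t ** matrix_inv (\<Phi> s)) ** (mat 1 - P s)) \<le> N * exp (- lam * (s - t))"
    and Npos: "0 < N" and lampos: "0 < lam" and taupos: "0 < \<tau>"
begin

definition "\<Psi> s = matrix_inv (\<Phi> s)"
definition "S = Itau \<tau>"
definition "K1 G s = (\<Psi> s ** P s) *v G s"
definition "K2 G s = (\<Psi> s ** (mat 1 - P s)) *v G s"
definition "Lin G t = \<Phi> t *v (integral {0..t} (K1 G) - integral (S \<inter> {t..}) (K2 G))"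

lemma Phi_deriv: "t \<ge> 0 \<Longrightarrow> (\<Phi> has_vector_derivative (A t ** \<Phi> t)) (at t within {0..})"
  using fm unfolding fundamental_matrix_def by blast

lemma Phi_inv: "s \<ge> 0 \<Longrightarrow> \<Phi> s ** \<Psi> s = mat 1" "s \<ge> 0 \<Longrightarrow> \<Psi> s ** \<Phi> s = mat 1"
  using fm matrix_inv_props unfolding fundamental_matrix_def \<Psi>_def by blast+

lemma Phi_cont: "continuous_on {0..} \<Phi>"
  by (rule continuous_on_vector_derivative) (use Phi_deriv in auto)

lemma P_eq: assumes "s \<ge> 0" shows "P s = \<Phi> s ** \<Psi> 0 ** P 0 ** \<Phi> 0 ** \<Psi> s"
proof -
  have c: "P s ** (\<Phi> s ** \<Psi> 0) = (\<Phi> s ** \<Psi> 0) ** P 0"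
    using comm assms unfolding \<Psi>_def by auto
  have "P s = P s ** (\<Phi> s ** (\<Psi> 0 ** \<Phi> 0) ** \<Psi> s)"
    using Phi_inv[of 0] Phi_inv[OF assms] by (simp add: matrix_mul_rid)
  also have "\<dots> = (P s ** (\<Phi> s ** \<Psi> 0)) ** \<Phi> 0 ** \<Psi> s" by (simp add: matrix_mul_assoc)
  also have "\<dots> = \<Phi> s ** \<Psi> 0 ** P 0 ** \<Phi> 0 ** \<Psi> s" using c by (simp add: matrix_mul_assoc)
  finally show ?thesis .
qed

lemma PsiP_eq: assumes "s \<ge> 0" shows "\<Psi> s ** P s = (\<Psi> 0 ** P 0 ** \<Phi> 0) ** \<Psi> s"
proof -
  have "\<Psi> s ** P s = (\<Psi> s ** \<Phi> s) ** \<Psi> 0 ** P 0 ** \<Phi> 0 ** \<Psi> s"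
    using P_eq[OF assms] by (simp add: matrix_mul_assoc)
  also have "\<dots> = (\<Psi> 0 ** P 0 ** \<Phi> 0) ** \<Psi> s" using Phi_inv(2)[OF assms]
    by (simp add: matrix_mul_assoc matrix_mul_lid)
  finally show ?thesis .
qed

lemma K1_eq: "s \<ge> 0 \<Longrightarrow> K1 G s = (\<Psi> 0 ** P 0 ** \<Phi> 0) *v (\<Psi> s *v G s)"
  unfolding K1_def by (subst PsiP_eq) (simp_all only: matrix_vector_mul_assoc)

lemma K12: "K1 G s + K2 G s = \<Psi> s *v G s"
proof -
  have "K1 G s + K2 G s = \<Psi> s *v (P s *v G s) + \<Psi> s *v ((mat 1 - P s) *v G s)"
    unfolding K1_def K2_def by (simp only: matrix_vector_mul_assoc)
  also have "\<dots> = \<Psi> s *v (P s *v G s + (mat 1 - P s) *v G s)"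
    by (simp only: matrix_vector_right_distrib)
  also have "P s *v G s + (mat 1 - P s) *v G s = G s"
    by (simp add: matrix_vector_mult_diff_rdistrib)
  finally show ?thesis .
qed

lemma K2_eq: "K2 G s = \<Psi> s *v G s - K1 G s"
  using K12[of G s] by (simp add: algebra_simps)

lemma cont_Psi_v:
  assumes "continuous_on U G" "U \<subseteq> {0..}"
  shows "continuous_on U (\<lambda>s. \<Psi> s *v G s)"
  unfolding \<Psi>_def
proof (rule continuous_on_inv_mv[OF _ _ assms(1)])
  show "continuous_on U \<Phi>" using continuous_on_subset[OF Phi_cont assms(2)] .
  show "\<And>s. s \<in> U \<Longrightarrow> invertible (\<Phi> s)" using fm assms(2) unfolding fundamental_matrix_def by auto
qed

lemma cont_K1:
  assumes "continuous_on U G" "U \<subseteq> {0..}"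
  shows "continuous_on U (K1 G)"
proof -
  have "continuous_on U (\<lambda>s. (\<Psi> 0 ** P 0 ** \<Phi> 0) *v (\<Psi> s *v G s))"
    by (rule cont_mv_const[OF cont_Psi_v[OF assms]])
  then show ?thesis by (rule continuous_on_cong[THEN iffD1, rotated 2]) (use assms(2) K1_eq in auto)
qed

lemma cont_K2:
  assumes "continuous_on U G" "U \<subseteq> {0..}"
  shows "continuous_on U (K2 G)"
  unfolding K2_eq by (intro continuous_on_diff cont_K1 cont_Psi_v assms)

lemma bound1:
  assumes "0 \<le> s" "s \<le> t"
  shows "nrm (\<Phi> t *v K1 G s) \<le> N * exp (- lam * (t - s)) * nrm (G s)"
proof -
  have "\<Phi> t *v K1 G s = ((\<Phi> t ** \<Psi> s) ** P s) *v G s"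
    unfolding K1_def by (simp only: matrix_vector_mul_assoc matrix_mul_assoc)
  then have "nrm (\<Phi> t *v K1 G s) \<le> mat_norm nrm ((\<Phi> t ** \<Psi> s) ** P s) * nrm (G s)"
    using mat_norm_bound[OF nrm] by simp
  also have "\<dots> \<le> N * exp (- lam * (t - s)) * nrm (G s)"
  proof (rule mult_right_mono)
      show "mat_norm nrm ((\<Phi> t ** \<Psi> s) ** P s) \<le> N * exp (- lam * (t - s))"
        using bd1 assms unfolding \<Psi>_def by blast
      show "0 \<le> nrm (G s)" by (rule nrm_basic(4)[OF nrm])
    qed
  finally show ?thesis .
qed

lemma bound2:
  assumes "0 \<le> t" "t \<le> s"
  shows "nrm (\<Phi> t *v K2 G s) \<le> N * exp (- lam * (s - t)) * nrm (G s)"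
proof -
  have "\<Phi> t *v K2 G s = ((\<Phi> t ** \<Psi> s) ** (mat 1 - P s)) *v G s"
    unfolding K2_def by (simp only: matrix_vector_mul_assoc matrix_mul_assoc)
  then have "nrm (\<Phi> t *v K2 G s) \<le> mat_norm nrm ((\<Phi> t ** \<Psi> s) ** (mat 1 - P s)) * nrm (G s)"
    using mat_norm_bound[OF nrm] by simp
  also have "\<dots> \<le> N * exp (- lam * (s - t)) * nrm (G s)"
  proof (rule mult_right_mono)
      show "mat_norm nrm ((\<Phi> t ** \<Psi> s) ** (mat 1 - P s)) \<le> N * exp (- lam * (s - t))"
        using bd2 assms unfolding \<Psi>_def by blast
      show "0 \<le> nrm (G s)" by (rule nrm_basic(4)[OF nrm])
    qed
  finally show ?thesis .
qed

end

context dich begin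

lemma S_sets: "S \<in> sets lebesgue" unfolding S_def by (rule Itau_sets[OF taupos])
lemma S_0: "0 \<in> S" unfolding S_def by (rule Itau_0[OF taupos])
lemma S_nonneg: "S \<subseteq> {0..}" unfolding S_def by (rule Itau_nonneg)
lemma S_down: "t \<in> S \<Longrightarrow> {0..t} \<subseteq> S" unfolding S_def using Itau_down by auto
lemma S_right: "t \<in> S \<Longrightarrow> \<exists>b>t. {0..b} \<subseteq> S" unfolding S_def by (rule Itau_right[OF taupos])

lemma M_nonneg: "\<forall>s\<in>S. nrm (G s) \<le> M \<Longrightarrow> 0 \<le> M"
  using S_0 nrm_basic(4)[OF nrm, of "G 0"] by fastforce

lemma int_K2:
  assumes G: "continuous_on S G" "\<forall>s\<in>S. nrm (G s) \<le> M" and t: "t \<ge> 0"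
  shows "K2 G integrable_on (S \<inter> {t..})"
    "(\<lambda>s. nrm (\<Phi> t *v K2 G s)) integrable_on (S \<inter> {t..})"
proof -
  have M0: "0 \<le> M" by (rule M_nonneg[OF G(2)])
  obtain C where C: "C > 0" "\<And>x. norm x \<le> C * nrm x" using nrm_lower[OF nrm] by blast
  have sub: "S \<inter> {t..} \<subseteq> {0..}" using S_nonneg by auto
  have meas: "S \<inter> {t..} \<in> sets lebesgue"
    by (intro sets.Int S_sets) (simp add: borel_closed sets_completionI_sets)
  have cG: "continuous_on (S \<inter> {t..}) G" using continuous_on_subset[OF G(1)] by blast
  let ?cc = "real CARD('n) * real CARD('n)"
  show "K2 G integrable_on (S \<inter> {t..})"
  proof (rule integrable_exp_bound[OF cont_K2[OF cG sub] meas _ lampos])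
    show "S \<inter> {t..} \<subseteq> {t..}" by auto
    show "0 \<le> norm (\<Psi> 0) * ?cc * C * N * M" using C Npos M0 by simp
    fix s assume s: "s \<in> S \<inter> {t..}"
    then have s0: "s \<ge> 0" using sub by auto
    have "K2 G s = \<Psi> 0 *v (\<Phi> 0 *v K2 G s)"
      using Phi_inv(2)[of 0] by (simp add: matrix_vector_mul_assoc)
    then have "norm (K2 G s) \<le> norm (\<Psi> 0) * norm (\<Phi> 0 *v K2 G s) * ?cc"
      using mv_norm_bound[of "\<Psi> 0"] by metis
    also have "\<dots> \<le> norm (\<Psi> 0) * (C * (N * exp (- lam * (s - 0)) * M)) * ?cc"
    proof -
      have "nrm (\<Phi> 0 *v K2 G s) \<le> N * exp (- lam * (s - 0)) * nrm (G s)" by (rule bound2) (use s0 in auto)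
      also have "\<dots> \<le> N * exp (- lam * (s - 0)) * M" using G(2) s Npos by (intro mult_left_mono) auto
      finally have "norm (\<Phi> 0 *v K2 G s) \<le> C * (N * exp (- lam * (s - 0)) * M)"
        using C by (meson mult_left_mono less_imp_le order_trans)
      then show ?thesis by (intro mult_right_mono mult_left_mono) auto
    qed
    also have "\<dots> = norm (\<Psi> 0) * ?cc * C * N * M * exp (- lam * s)" by simp
    finally show "norm (K2 G s) \<le> norm (\<Psi> 0) * ?cc * C * N * M * exp (- lam * s)" .
  qed
  show "(\<lambda>s. nrm (\<Phi> t *v K2 G s)) integrable_on (S \<inter> {t..})"
  proof (rule integrable_exp_bound[OF cont_nrm_comp[OF nrm cont_mv_const[OF cont_K2[OF cG sub]]] meas _ lampos])
    show "S \<inter> {t..} \<subseteq> {t..}" by auto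
    show "0 \<le> N * M * exp (lam * t)" using Npos M0 by simp
    fix s assume s: "s \<in> S \<inter> {t..}"
    have "norm (nrm (\<Phi> t *v K2 G s)) = nrm (\<Phi> t *v K2 G s)" using nrm_basic(4)[OF nrm] by simp
    also have "\<dots> \<le> N * exp (- lam * (s - t)) * nrm (G s)" by (rule bound2) (use s t in auto)
    also have "\<dots> \<le> N * exp (- lam * (s - t)) * M" using G(2) s Npos by (intro mult_left_mono) auto
    also have "\<dots> = N * M * exp (lam * t) * exp (- lam * s)"
      by (simp add: algebra_simps flip: exp_add)
    finally show "norm (nrm (\<Phi> t *v K2 G s)) \<le> N * M * exp (lam * t) * exp (- lam * s)" .
  qed
qed

lemma int_exp0:
  assumes "t \<ge> 0" "M \<ge> 0"
  shows "(\<lambda>s. N * M * exp (- lam * (t - s))) integrable_on {0..t}"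
    "integral {0..t} (\<lambda>s. N * M * exp (- lam * (t - s))) \<le> N * M / lam"
proof -
  have "((\<lambda>s. N * M * exp (- lam * (t - s))) has_integral
      (N * M * exp (- lam * (t - t)) / lam - N * M * exp (- lam * (t - 0)) / lam)) {0..t}"
  proof (rule fundamental_theorem_of_calculus[OF assms(1)])
    fix x assume "x \<in> {0..t}"
    show "((\<lambda>s. N * M * exp (- lam * (t - s)) / lam) has_vector_derivative N * M * exp (- lam * (t - x)))
        (at x within {0..t})"
      unfolding has_real_derivative_iff_has_vector_derivative[symmetric]
      using lampos by (auto intro!: derivative_eq_intros simp: field_simps)
  qed
  note hi = this
  then show "(\<lambda>s. N * M * exp (- lam * (t - s))) integrable_on {0..t}" by blast
  have "integral {0..t} (\<lambda>s. N * M * exp (- lam * (t - s))) =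
      N * M * exp (- lam * (t - t)) / lam - N * M * exp (- lam * (t - 0)) / lam"
    by (rule integral_unique[OF hi])
  also have "\<dots> \<le> N * M / lam" using Npos assms(2) lampos by simp
  finally show "integral {0..t} (\<lambda>s. N * M * exp (- lam * (t - s))) \<le> N * M / lam" .
qed

lemma int_exp_inf:
  "((\<lambda>s. N * M * exp (- lam * (s - t))) has_integral N * M / lam) {t..}"
proof -
  have "((\<lambda>x::real. exp (-lam*x)) has_integral exp (-lam*t)/lam) {t..}"
    by (rule has_integral_exp_minus_to_infinity[OF lampos])
  then have "((\<lambda>x::real. (N * M * exp (lam * t)) * exp (-lam*x)) has_integral
      (N * M * exp (lam * t)) * (exp (-lam*t)/lam)) {t..}"
    by (rule has_integral_mult_right)
  moreover have e1: "(\<lambda>x::real. (N * M * exp (lam * t)) * exp (-lam*x)) = (\<lambda>s. N * M * exp (- lam * (s - t)))"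
    by (rule ext) (simp add: algebra_simps flip: exp_add)
  moreover have e2: "(N * M * exp (lam * t)) * (exp (-lam*t)/lam) = N * M / lam"
    by (simp add: mult.assoc flip: exp_add)
  ultimately show ?thesis by (simp only: e1 e2)
qed

end

context dich begin

lemma int_exp_S:
  assumes "t \<ge> 0" "M \<ge> 0"
  shows "(\<lambda>s. N * M * exp (- lam * (s - t))) integrable_on (S \<inter> {t..})"
proof (rule integrable_exp_bound[OF _ _ _ lampos])
  show "continuous_on (S \<inter> {t..}) (\<lambda>s. N * M * exp (- lam * (s - t)))" by (intro continuous_intros)
  show "S \<inter> {t..} \<in> sets lebesgue"
    by (intro sets.Int S_sets) (simp add: borel_closed sets_completionI_sets)
  show "S \<inter> {t..} \<subseteq> {t..}" by auto
  show "0 \<le> N * M * exp (lam * t)" using Npos assms by simp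
  fix s
  have "norm (N * M * exp (- lam * (s - t))) = N * M * exp (- lam * (s - t))" using Npos assms by simp
  also have "\<dots> = N * M * exp (lam * t) * exp (- lam * s)" by (simp add: algebra_simps flip: exp_add)
  finally show "norm (N * M * exp (- lam * (s - t))) \<le> N * M * exp (lam * t) * exp (- lam * s)" by simp
qed

lemma Lin_bound:
  assumes G: "continuous_on S G" "\<forall>s\<in>S. nrm (G s) \<le> M" and t: "t \<in> S"
  shows "nrm (Lin G t) \<le> 2 * N * M / lam"
proof -
  have t0: "t \<ge> 0" using t S_nonneg by auto
  have M0: "0 \<le> M" by (rule M_nonneg[OF G(2)])
  have sub: "{0..t} \<subseteq> S" using S_down[OF t] .
  have c1: "continuous_on {0..t} (K1 G)"
    by (rule cont_K1[OF continuous_on_subset[OF G(1) sub]]) auto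
  have i1: "K1 G integrable_on {0..t}" by (rule integrable_continuous_real[OF c1])
  have e1: "\<Phi> t *v integral {0..t} (K1 G) = integral {0..t} (\<lambda>s. \<Phi> t *v K1 G s)"
    using integral_linear[OF i1 matrix_vector_mul_bounded_linear[of "\<Phi> t"]] by (simp add: o_def)
  have c1': "continuous_on {0..t} (\<lambda>s. \<Phi> t *v K1 G s)" by (rule cont_mv_const[OF c1])
  have "nrm (integral {0..t} (\<lambda>s. \<Phi> t *v K1 G s)) \<le> integral {0..t} (\<lambda>s. nrm (\<Phi> t *v K1 G s))"
    by (rule nrm_integral_le[OF nrm integrable_continuous_real[OF c1']
          integrable_continuous_real[OF cont_nrm_comp[OF nrm c1']]])
  also have "\<dots> \<le> integral {0..t} (\<lambda>s. N * M * exp (- lam * (t - s)))"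
  proof (rule integral_le[OF integrable_continuous_real[OF cont_nrm_comp[OF nrm c1']] int_exp0(1)[OF t0 M0]])
    fix s assume s: "s \<in> {0..t}"
    have "nrm (\<Phi> t *v K1 G s) \<le> N * exp (- lam * (t - s)) * nrm (G s)" by (rule bound1) (use s in auto)
    also have "\<dots> \<le> N * exp (- lam * (t - s)) * M" using G(2) s sub Npos by (intro mult_left_mono) auto
    finally show "nrm (\<Phi> t *v K1 G s) \<le> N * M * exp (- lam * (t - s))" by (simp add: algebra_simps)
  qed
  also have "\<dots> \<le> N * M / lam" by (rule int_exp0(2)[OF t0 M0])
  finally have A1: "nrm (\<Phi> t *v integral {0..t} (K1 G)) \<le> N * M / lam" using e1 by simp
  have i2: "K2 G integrable_on (S \<inter> {t..})" by (rule int_K2(1)[OF G t0])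
  have e2: "\<Phi> t *v integral (S \<inter> {t..}) (K2 G) = integral (S \<inter> {t..}) (\<lambda>s. \<Phi> t *v K2 G s)"
    using integral_linear[OF i2 matrix_vector_mul_bounded_linear[of "\<Phi> t"]] by (simp add: o_def)
  have i2': "(\<lambda>s. \<Phi> t *v K2 G s) integrable_on (S \<inter> {t..})"
    using integrable_linear[OF i2 matrix_vector_mul_bounded_linear[of "\<Phi> t"]] by (simp add: o_def)
  have "nrm (integral (S \<inter> {t..}) (\<lambda>s. \<Phi> t *v K2 G s)) \<le> integral (S \<inter> {t..}) (\<lambda>s. nrm (\<Phi> t *v K2 G s))"
    by (rule nrm_integral_le[OF nrm i2' int_K2(2)[OF G t0]])
  also have "\<dots> \<le> integral (S \<inter> {t..}) (\<lambda>s. N * M * exp (- lam * (s - t)))"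
  proof (rule integral_le[OF int_K2(2)[OF G t0] int_exp_S[OF t0 M0]])
    fix s assume s: "s \<in> S \<inter> {t..}"
    have "nrm (\<Phi> t *v K2 G s) \<le> N * exp (- lam * (s - t)) * nrm (G s)" by (rule bound2) (use s t0 in auto)
    also have "\<dots> \<le> N * exp (- lam * (s - t)) * M" using G(2) s Npos by (intro mult_left_mono) auto
    finally show "nrm (\<Phi> t *v K2 G s) \<le> N * M * exp (- lam * (s - t))" by (simp add: algebra_simps)
  qed
  also have "\<dots> \<le> integral {t..} (\<lambda>s. N * M * exp (- lam * (s - t)))"
    by (rule integral_subset_le[OF _ int_exp_S[OF t0 M0]]) (use int_exp_inf Npos M0 in auto)
  also have "\<dots> = N * M / lam" by (rule integral_unique[OF int_exp_inf])
  finally have A2: "nrm (\<Phi> t *v integral (S \<inter> {t..}) (K2 G)) \<le> N * M / lam" using e2 by simp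
  have "Lin G t = \<Phi> t *v integral {0..t} (K1 G) + - (\<Phi> t *v integral (S \<inter> {t..}) (K2 G))"
    unfolding Lin_def by (simp add: matrix_vector_mult_diff_distrib)
  then have "nrm (Lin G t) \<le> nrm (\<Phi> t *v integral {0..t} (K1 G)) + nrm (- (\<Phi> t *v integral (S \<inter> {t..}) (K2 G)))"
    using nrm_basic(5)[OF nrm] by metis
  then have tri: "nrm (Lin G t) \<le> nrm (\<Phi> t *v integral {0..t} (K1 G)) + nrm (\<Phi> t *v integral (S \<inter> {t..}) (K2 G))"
    using nrm_basic(2)[OF nrm] by simp
  also have "\<dots> \<le> N * M / lam + N * M / lam" using A1 A2 by (rule add_mono)
  also have "N * M / lam + N * M / lam = 2 * N * M / lam" by (simp add: field_simps)
  finally show ?thesis .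
qed

lemma Lin_split:
  assumes G: "continuous_on S G" "\<forall>s\<in>S. nrm (G s) \<le> M" and u: "u \<in> S"
  shows "Lin G u = \<Phi> u *v (integral {0..u} (\<lambda>s. \<Psi> s *v G s) - integral S (K2 G))"
proof -
  have u0: "u \<ge> 0" using u S_nonneg by auto
  have sub: "{0..u} \<subseteq> S" using S_down[OF u] .
  have cG: "continuous_on {0..u} G" by (rule continuous_on_subset[OF G(1) sub])
  have iK1: "K1 G integrable_on {0..u}" by (rule integrable_continuous_real[OF cont_K1[OF cG]]) auto
  have iK2a: "K2 G integrable_on {0..u}" by (rule integrable_continuous_real[OF cont_K2[OF cG]]) auto
  have iK2b: "K2 G integrable_on (S \<inter> {u..})" by (rule int_K2(1)[OF G u0])
  have "(K2 G has_integral (integral {0..u} (K2 G) + integral (S \<inter> {u..}) (K2 G))) ({0..u} \<union> (S \<inter> {u..}))"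
  proof (rule has_integral_Un[OF integrable_integral[OF iK2a] integrable_integral[OF iK2b]])
    show "negligible ({0..u} \<inter> (S \<inter> {u..}))"
      by (rule negligible_subset[OF negligible_sing[of u]]) auto
  qed
  moreover have "{0..u} \<union> (S \<inter> {u..}) = S" using sub S_nonneg by auto
  ultimately have I: "integral S (K2 G) = integral {0..u} (K2 G) + integral (S \<inter> {u..}) (K2 G)"
    by (simp add: integral_unique)
  have "integral {0..u} (\<lambda>s. K1 G s + K2 G s) = integral {0..u} (K1 G) + integral {0..u} (K2 G)"
    by (rule Henstock_Kurzweil_Integration.integral_add[OF iK1 iK2a])
  then have II: "integral {0..u} (\<lambda>s. \<Psi> s *v G s) = integral {0..u} (K1 G) + integral {0..u} (K2 G)"
    by (simp add: K12)
  show ?thesis unfolding Lin_def I II by (simp add: algebra_simps)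
qed

lemma Lin_deriv:
  assumes G: "continuous_on S G" "\<forall>s\<in>S. nrm (G s) \<le> M" and t: "t \<in> S"
  shows "(Lin G has_vector_derivative (A t *v Lin G t + G t)) (at t within S)"
proof -
  obtain b where b: "b > t" "{0..b} \<subseteq> S" using S_right[OF t] by blast
  have t0: "t \<ge> 0" using t S_nonneg by auto
  define C where "C = integral S (K2 G)"
  define W where "W u = integral {0..u} (\<lambda>s. \<Psi> s *v G s) - C" for u
  have cb: "continuous_on {0..b} (\<lambda>s. \<Psi> s *v G s)"
    by (rule cont_Psi_v[OF continuous_on_subset[OF G(1) b(2)]]) auto
  have "((\<lambda>u. integral {0..u} (\<lambda>s. \<Psi> s *v G s)) has_vector_derivative \<Psi> t *v G t) (at t within {0..b})"
    by (rule integral_has_vector_derivative[OF cb]) (use t0 b in auto)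
  then have dW: "(W has_vector_derivative \<Psi> t *v G t) (at t within {0..b})"
    unfolding W_def using has_vector_derivative_diff[OF _ has_vector_derivative_const[of C]] by fastforce
  have dPhi: "(\<Phi> has_vector_derivative (A t ** \<Phi> t)) (at t within {0..b})"
    by (rule has_vector_derivative_within_subset[OF Phi_deriv[OF t0]]) auto
  have dF: "((\<lambda>x. \<Phi> x *v W x) has_vector_derivative (\<Phi> t *v (\<Psi> t *v G t) + (A t ** \<Phi> t) *v W t))
      (at t within {0..b})"
    using bounded_bilinear.has_vector_derivative[OF bounded_bilinear_mv dPhi dW] by simp
  have eqD: "\<Phi> t *v (\<Psi> t *v G t) + (A t ** \<Phi> t) *v W t = A t *v Lin G t + G t"
  proof -
    have "\<Phi> t *v (\<Psi> t *v G t) = G t"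
      using Phi_inv(1)[OF t0] by (simp add: matrix_vector_mul_assoc)
    moreover have "(A t ** \<Phi> t) *v W t = A t *v Lin G t"
      using Lin_split[OF G t] by (simp add: matrix_vector_mul_assoc[symmetric] W_def C_def)
    ultimately show ?thesis by (simp add: add.commute)
  qed
  have at_eq: "at t within {0..b} = at t within S"
    by (rule at_within_nhd[of t "{..<b}"]) (use b S_nonneg in auto)
  have dF': "((\<lambda>x. \<Phi> x *v W x) has_vector_derivative (A t *v Lin G t + G t)) (at t within S)"
    using dF unfolding eqD at_eq .
  show ?thesis
  proof (rule has_vector_derivative_transform_within[OF dF' zero_less_one t])
    fix x assume "x \<in> S"
    then show "\<Phi> x *v W x = Lin G x" using Lin_split[OF G] by (simp add: W_def C_def)
  qed
qed

lemma Lin_cont: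
  assumes G: "continuous_on S G" "\<forall>s\<in>S. nrm (G s) \<le> M"
  shows "continuous_on S (Lin G)"
  by (rule continuous_on_vector_derivative) (rule Lin_deriv[OF G])

lemma Lin_diff:
  assumes G1: "continuous_on S G1" "\<forall>s\<in>S. nrm (G1 s) \<le> M1"
    and G2: "continuous_on S G2" "\<forall>s\<in>S. nrm (G2 s) \<le> M2" and t: "t \<in> S"
  shows "Lin G1 t - Lin G2 t = Lin (\<lambda>s. G1 s - G2 s) t"
proof -
  have t0: "t \<ge> 0" using t S_nonneg by auto
  have sub: "{0..t} \<subseteq> S" using S_down[OF t] .
  have i1: "K1 G1 integrable_on {0..t}" "K1 G2 integrable_on {0..t}"
    by (rule integrable_continuous_real[OF cont_K1[OF continuous_on_subset[OF _ sub]]], (use G1 G2 in auto))+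
  have i2: "K2 G1 integrable_on (S \<inter> {t..})" "K2 G2 integrable_on (S \<inter> {t..})"
    by (rule int_K2(1)[OF G1 t0], rule int_K2(1)[OF G2 t0])
  have k1: "K1 (\<lambda>s. G1 s - G2 s) = (\<lambda>s. K1 G1 s - K1 G2 s)"
    by (rule ext) (simp add: K1_def matrix_vector_mult_diff_distrib)
  have k2: "K2 (\<lambda>s. G1 s - G2 s) = (\<lambda>s. K2 G1 s - K2 G2 s)"
    by (rule ext) (simp add: K2_def matrix_vector_mult_diff_distrib)
  show ?thesis
    unfolding Lin_def k1 k2 Henstock_Kurzweil_Integration.integral_diff[OF i1]
      Henstock_Kurzweil_Integration.integral_diff[OF i2]
    by (simp add: matrix_vector_mult_diff_distrib algebra_simps)
qed

end

lemma geo_limit: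
  fixes X :: "nat \<Rightarrow> 'a::banach"
  assumes bd: "\<And>m k. k \<le> m \<Longrightarrow> norm (X m - X k) \<le> B * q^k" and q: "0 \<le> q" "q < 1"
  shows "\<exists>x. X \<longlonglongrightarrow> x \<and> (\<forall>k. norm (x - X k) \<le> B * q^k)"
proof -
  have t0: "(\<lambda>k. B * q^k) \<longlonglongrightarrow> 0"
    by (intro tendsto_mult_right_zero LIMSEQ_power_zero) (use q in simp)
  have "Cauchy X"
  proof (rule CauchyI)
    fix e :: real assume e: "0 < e"
    from order_tendstoD(2)[OF t0 e] obtain K where K: "\<And>k. k \<ge> K \<Longrightarrow> B * q^k < e"
      by (auto simp: eventually_sequentially)
    show "\<exists>M. \<forall>m\<ge>M. \<forall>n\<ge>M. norm (X m - X n) < e"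
    proof (intro exI allI impI)
      fix m n assume mn: "K \<le> m" "K \<le> n"
      show "norm (X m - X n) < e"
      proof (cases "n \<le> m")
        case True
        then have "norm (X m - X n) \<le> B * q^n" by (rule bd)
        also have "\<dots> < e" using K mn by blast
        finally show ?thesis .
      next
        case False
        then have "norm (X n - X m) \<le> B * q^m" using bd by simp
        also have "\<dots> < e" using K mn by blast
        finally show ?thesis by (simp add: norm_minus_commute)
      qed
    qed
  qed
  then obtain x where x: "X \<longlonglongrightarrow> x" using Cauchy_convergent_iff convergent_def by blast
  have "norm (x - X k) \<le> B * q^k" for k
  proof (rule LIMSEQ_le_const2)
    show "(\<lambda>m. norm (X m - X k)) \<longlonglongrightarrow> norm (x - X k)" by (intro tendsto_intros x)
    show "\<exists>N. \<forall>n\<ge>N. norm (X n - X k) \<le> B * q ^ k" using bd by blast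
  qed
  then show ?thesis using x by blast
qed

lemma geo_conv:
  fixes X :: "nat \<Rightarrow> 'a::real_normed_vector"
  assumes bd: "\<And>k. norm (X k - x) \<le> B * q^k" and q: "0 \<le> q" "q < 1"
  shows "X \<longlonglongrightarrow> x"
proof -
  have t0: "(\<lambda>k. B * q^k) \<longlonglongrightarrow> 0"
    by (intro tendsto_mult_right_zero LIMSEQ_power_zero) (use q in simp)
  have "(\<lambda>k. X k - x) \<longlonglongrightarrow> 0"
    by (rule Lim_null_comparison[OF _ t0]) (use bd in auto)
  then have "(\<lambda>k. X k - x + x) \<longlonglongrightarrow> 0 + x" by (intro tendsto_intros)
  then show ?thesis by simp
qed

lemma nrm_tendsto:
  fixes nrm :: "real^'n \<Rightarrow> real"
  assumes "is_norm nrm" "X \<longlonglongrightarrow> x"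
  shows "(\<lambda>n. nrm (X n)) \<longlonglongrightarrow> nrm x"
proof -
  have "isCont nrm x"
    using nrm_lipschitz[OF assms(1), of UNIV] continuous_on_eq_continuous_at[OF open_UNIV] by blast
  then show ?thesis using isCont_tendsto_compose assms(2) by blast
qed


context dich begin

lemma shadow:
  fixes f :: "real \<Rightarrow> real^'n \<Rightarrow> real^'n" and y :: "real \<Rightarrow> real^'n" and H :: "(real^'n) set"
  assumes A_cont: "continuous_on {0..} A"
    and f_cont: "continuous_on ({0..} \<times> UNIV) (\<lambda>(t, x). f t x)"
    and Lip: "\<forall>t\<ge>0. \<forall>x1\<in>nbhd_n nrm \<delta> H. \<forall>x2\<in>nbhd_n nrm \<delta> H. nrm (f t x1 - f t x2) \<le> L * nrm (x1 - x2)"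
    and q1: "2 * N * L / lam < 1" and L0: "0 < L"
    and eps: "0 < \<epsilon>" "(2 * N / lam) / (1 - 2 * N * L / lam) * \<epsilon> \<le> \<delta>"
    and ps: "pseudosol_le nrm (\<lambda>t x. A t *v x + f t x) \<tau> y \<epsilon>"
    and yH: "\<forall>t\<in>Itau \<tau>. y t \<in> H"
  shows "\<exists>x. is_solution_on (\<lambda>t x. A t *v x + f t x) \<tau> x \<and>
      (\<forall>t\<in>Itau \<tau>. nrm (x t - y t) \<le> (2 * N / lam) / (1 - 2 * N * L / lam) * \<epsilon>)"
proof -
  define q where "q = 2 * N * L / lam"
  define \<beta> where "\<beta> = 2 * N / lam"
  define \<kappa> where "\<kappa> = \<beta> / (1 - q)"
  define \<rho> where "\<rho> = \<kappa> * \<epsilon>"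
  have q0: "0 \<le> q" "q < 1" using q1 Npos lampos L0 by (auto simp: q_def)
  have \<beta>0: "\<beta> > 0" using Npos lampos by (simp add: \<beta>_def)
  have \<kappa>0: "\<kappa> > 0" using \<beta>0 q0 by (simp add: \<kappa>_def)
  have \<rho>0: "0 \<le> \<rho>" using \<kappa>0 eps by (simp add: \<rho>_def)
  have \<rho>\<delta>: "\<rho> \<le> \<delta>" using eps by (simp add: \<rho>_def \<kappa>_def \<beta>_def q_def)
  have key: "2 * N * (L * \<rho> + \<epsilon>) / lam = \<rho>"
  proof -
    have "1 - q \<noteq> 0" using q0 by simp
    then show ?thesis using lampos
      by (simp add: \<rho>_def \<kappa>_def \<beta>_def q_def field_simps)
  qed
  have Seq: "Itau \<tau> = S" by (simp add: S_def)
  obtain y' where y': "\<And>t. t \<in> S \<Longrightarrow> (y has_vector_derivative y' t) (at t within S)" "continuous_on S y'"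
      "\<And>t. t \<in> S \<Longrightarrow> nrm (y' t - (A t *v y t + f t (y t))) \<le> \<epsilon>"
    using ps unfolding pseudosol_le_def Seq by blast
  have yc: "continuous_on S y" by (rule continuous_on_vector_derivative) (rule y'(1))
  have yH': "\<And>t. t \<in> S \<Longrightarrow> y t \<in> H" using yH Seq by blast
  define h where "h s = y' s - (A s *v y s + f s (y s))" for s
  define GG where "GG z s = f s (y s + z s) - f s (y s) - h s" for z :: "real \<Rightarrow> real^'n" and s
  define good where "good z \<longleftrightarrow> continuous_on S z \<and> (\<forall>s\<in>S. nrm (z s) \<le> \<rho>)" for z :: "real \<Rightarrow> real^'n"
  have fc: "continuous_on S (\<lambda>s. f s (y s + z s))" if cz: "continuous_on S z" for z
  proof -
    have "continuous_on S (\<lambda>s. (\<lambda>(t, x). f t x) (s, y s + z s))"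
    proof (rule continuous_on_compose2[OF f_cont])
      show "continuous_on S (\<lambda>s. (s, y s + z s))" by (intro continuous_intros yc cz)
      show "(\<lambda>s. (s, y s + z s)) ` S \<subseteq> {0..} \<times> UNIV" using S_nonneg by auto
    qed
    then show ?thesis by simp
  qed
  have Ac: "continuous_on S (\<lambda>s. A s *v y s)"
    using bounded_bilinear.continuous_on[OF bounded_bilinear_mv continuous_on_subset[OF A_cont S_nonneg] yc]
    by simp
  have fy: "continuous_on S (\<lambda>s. f s (y s))" using fc[of "\<lambda>_. 0"] by simp
  have hc: "continuous_on S h" unfolding h_def by (intro continuous_intros y'(2) Ac fy)
  have GGc: "continuous_on S (GG z)" if "good z" for z
    using that unfolding GG_def good_def by (intro continuous_intros fc fy hc) auto
  have nb: "y s + w \<in> nbhd_n nrm \<delta> H" if "s \<in> S" "nrm w \<le> \<delta>" for s w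
    unfolding nbhd_n_def closed_ball_n_def using that yH' by (intro UN_I[of "y s"]) auto
  have tri: "nrm (a - b) \<le> nrm a + nrm b" for a b :: "real^'n"
    using nrm_basic(5)[OF nrm, of a "-b"] nrm_basic(2)[OF nrm, of b] by simp
  have GGd: "nrm (GG a s - GG b s) \<le> L * nrm (a s - b s)" if "s \<in> S" "nrm (a s) \<le> \<delta>" "nrm (b s) \<le> \<delta>" for a b s
  proof -
    have "GG a s - GG b s = f s (y s + a s) - f s (y s + b s)" by (simp add: GG_def)
    moreover have "nrm (f s (y s + a s) - f s (y s + b s)) \<le> L * nrm ((y s + a s) - (y s + b s))"
    proof -
      have "s \<ge> 0" using S_nonneg that(1) by auto
      then show ?thesis using Lip nb[OF that(1,2)] nb[OF that(1,3)] by blast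
    qed
    ultimately show ?thesis by simp
  qed
  have GGb: "nrm (GG z s) \<le> L * \<rho> + \<epsilon>" if "good z" "s \<in> S" for z s
  proof -
    have zs: "nrm (z s) \<le> \<rho>" using that unfolding good_def by auto
    have "nrm (GG z s) \<le> nrm (GG z s - GG (\<lambda>_. 0) s) + nrm (GG (\<lambda>_. 0) s)"
      using nrm_basic(5)[OF nrm, of "GG z s - GG (\<lambda>_. 0) s" "GG (\<lambda>_. 0) s"] by simp
    also have "nrm (GG z s - GG (\<lambda>_. 0) s) \<le> L * nrm (z s - 0)"
      using GGd[of s z "\<lambda>_. 0"] that(2) zs \<rho>\<delta> nrm_basic(1)[OF nrm] \<rho>0 by auto
    also have "nrm (GG (\<lambda>_. 0) s) \<le> \<epsilon>"
      using y'(3)[OF that(2)] nrm_basic(3)[OF nrm, of "y' s" "A s *v y s + f s (y s)"] by (simp add: GG_def h_def)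
    finally have "nrm (GG z s) \<le> L * nrm (z s) + \<epsilon>" by simp
    moreover have "L * nrm (z s) \<le> L * \<rho>" using zs L0 by (simp add: mult_left_mono)
    ultimately show ?thesis by linarith
  qed
  define \<Gamma> where "\<Gamma> z = Lin (GG z)" for z
  have \<Gamma>good: "good (\<Gamma> z)" if "good z" for z
  proof -
    have b: "\<forall>s\<in>S. nrm (GG z s) \<le> L * \<rho> + \<epsilon>" using GGb[OF that] by blast
    have "nrm (\<Gamma> z t) \<le> \<rho>" if "t \<in> S" for t
      using Lin_bound[OF GGc[OF \<open>good z\<close>] b that] key by (simp add: \<Gamma>_def mult.assoc)
    moreover have "continuous_on S (\<Gamma> z)" unfolding \<Gamma>_def by (rule Lin_cont[OF GGc[OF that] b])
    ultimately show ?thesis unfolding good_def by blast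
  qed
  have \<Gamma>diff: "nrm (\<Gamma> a t - \<Gamma> b t) \<le> q * D"
    if ab: "good a" "good b" and D: "\<forall>s\<in>S. nrm (a s - b s) \<le> D" and t: "t \<in> S" for a b D t
  proof -
    have ba: "\<forall>s\<in>S. nrm (GG a s) \<le> L * \<rho> + \<epsilon>" "\<forall>s\<in>S. nrm (GG b s) \<le> L * \<rho> + \<epsilon>"
      using GGb ab by blast+
    have "\<Gamma> a t - \<Gamma> b t = Lin (\<lambda>s. GG a s - GG b s) t"
      unfolding \<Gamma>_def by (rule Lin_diff[OF GGc[OF ab(1)] ba(1) GGc[OF ab(2)] ba(2) t])
    moreover have "nrm (Lin (\<lambda>s. GG a s - GG b s) t) \<le> 2 * N * (L * D) / lam"
    proof (rule Lin_bound[OF _ _ t])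
      show "continuous_on S (\<lambda>s. GG a s - GG b s)" by (intro continuous_intros GGc ab)
      show "\<forall>s\<in>S. nrm (GG a s - GG b s) \<le> L * D"
      proof
        fix s assume s: "s \<in> S"
        have "nrm (a s) \<le> \<delta>" "nrm (b s) \<le> \<delta>" using ab s \<rho>\<delta> unfolding good_def by force+
        then have "nrm (GG a s - GG b s) \<le> L * nrm (a s - b s)" using GGd s by blast
        also have "\<dots> \<le> L * D" using D s L0 by (simp add: mult_left_mono)
        finally show "nrm (GG a s - GG b s) \<le> L * D" .
      qed
    qed
    ultimately show ?thesis by (simp add: q_def)
  qed
  define zs where "zs n = (\<Gamma> ^^ n) (\<lambda>_. 0)" for n
  have zs_Suc: "zs (Suc n) = \<Gamma> (zs n)" for n by (simp add: zs_def)
  have zgood: "good (zs n)" for n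
  proof (induction n)
    case 0
    show ?case unfolding zs_def good_def using \<rho>0 nrm_basic(1)[OF nrm] by simp
  next
    case (Suc n) then show ?case unfolding zs_Suc by (rule \<Gamma>good)
  qed
  have stepb: "\<forall>s\<in>S. nrm (zs (Suc n) s - zs n s) \<le> q^n * \<rho>" for n
  proof (induction n)
    case 0
    show ?case using zgood[of 1] by (simp add: zs_def good_def)
  next
    case (Suc n)
    show ?case
    proof
      fix s assume "s \<in> S"
      have "nrm (\<Gamma> (zs (Suc n)) s - \<Gamma> (zs n) s) \<le> q * (q^n * \<rho>)"
        by (rule \<Gamma>diff[OF zgood zgood Suc \<open>s \<in> S\<close>])
      then show "nrm (zs (Suc (Suc n)) s - zs (Suc n) s) \<le> q ^ Suc n * \<rho>"
        unfolding zs_Suc[of "Suc n"] zs_Suc[of n] by (simp add: mult.assoc)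
    qed
  qed
  have cauchy0: "nrm (zs m s - zs k s) \<le> \<rho> * (q^k - q^m) / (1 - q)" if "k \<le> m" "s \<in> S" for m k s
    using that(1)
  proof (induction m rule: dec_induct)
    case base then show ?case using nrm_basic(1)[OF nrm] by simp
  next
    case (step m)
    have "nrm (zs (Suc m) s - zs k s) \<le> nrm (zs (Suc m) s - zs m s) + nrm (zs m s - zs k s)"
      using nrm_basic(5)[OF nrm, of "zs (Suc m) s - zs m s" "zs m s - zs k s"] by simp
    also have "\<dots> \<le> q^m * \<rho> + \<rho> * (q^k - q^m) / (1 - q)"
      using step.IH \<open>s \<in> S\<close> stepb[of m] by (intro add_mono) auto
    also have "\<dots> = \<rho> * (q^k - q^Suc m) / (1 - q)"
      using q0 by (simp add: field_simps)
    finally show ?case .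
  qed
  have cauchy: "nrm (zs m s - zs k s) \<le> \<rho> / (1 - q) * q^k" if "k \<le> m" "s \<in> S" for m k s
  proof -
    have nn: "0 \<le> \<rho> / (1 - q) * q^m" using q0 \<rho>0 by simp
    have "\<rho> * (q^k - q^m) / (1 - q) = \<rho> / (1 - q) * q^k - \<rho> / (1 - q) * q^m"
      by (simp add: right_diff_distrib diff_divide_distrib)
    then have "\<rho> * (q^k - q^m) / (1 - q) \<le> \<rho> / (1 - q) * q^k" using nn by linarith
    then show ?thesis using cauchy0[OF that] by linarith
  qed
  obtain C where C: "C > 0" "\<And>x. norm x \<le> C * nrm x" using nrm_lower[OF nrm] by blast
  define B where "B = C * (\<rho> / (1 - q))"
  have B0: "B \<ge> 0" using C \<rho>0 q0 by (simp add: B_def)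
  have ex: "\<exists>x. (\<lambda>n. zs n s) \<longlonglongrightarrow> x \<and> (\<forall>k. norm (x - zs k s) \<le> B * q^k)" if s: "s \<in> S" for s
  proof (rule geo_limit[OF _ q0])
    fix m k :: nat assume "k \<le> m"
    have "norm (zs m s - zs k s) \<le> C * nrm (zs m s - zs k s)" by (rule C(2))
    also have "\<dots> \<le> C * (\<rho> / (1 - q) * q^k)"
      by (rule mult_left_mono[OF cauchy[OF \<open>k \<le> m\<close> s]]) (use C in simp)
    finally show "norm (zs m s - zs k s) \<le> B * q^k" by (simp add: B_def mult.assoc)
  qed
  define z where "z s = lim (\<lambda>n. zs n s)" for s
  have zlim: "(\<lambda>n. zs n s) \<longlonglongrightarrow> z s" "\<And>k. norm (z s - zs k s) \<le> B * q^k" if "s \<in> S" for s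
  proof -
    from ex[OF that] obtain x where x: "(\<lambda>n. zs n s) \<longlonglongrightarrow> x" "\<forall>k. norm (x - zs k s) \<le> B * q^k" by blast
    then have "z s = x" unfolding z_def using limI[OF x(1)] by simp
    then show "(\<lambda>n. zs n s) \<longlonglongrightarrow> z s" "\<And>k. norm (z s - zs k s) \<le> B * q^k" using x by auto
  qed
  have znrm: "nrm (z s - zs k s) \<le> \<rho> / (1 - q) * q^k" if s: "s \<in> S" for s k
  proof (rule LIMSEQ_le_const2)
    show "(\<lambda>m. nrm (zs m s - zs k s)) \<longlonglongrightarrow> nrm (z s - zs k s)"
      by (rule nrm_tendsto[OF nrm]) (intro tendsto_intros zlim(1)[OF s])
    show "\<exists>N. \<forall>n\<ge>N. nrm (zs n s - zs k s) \<le> \<rho> / (1 - q) * q ^ k" using cauchy s by blast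
  qed
  have zgood': "good z"
    unfolding good_def
  proof
    show "continuous_on S z"
    proof (rule uniform_limit_theorem[of _ zs])
      show "\<forall>\<^sub>F n in sequentially. continuous_on S (zs n)" using zgood unfolding good_def by simp
      show "\<not> trivial_limit sequentially" by simp
      show "uniform_limit S zs z sequentially"
      proof (rule uniform_limitI)
        fix e :: real assume e: "0 < e"
        have t0: "(\<lambda>k. B * q^k) \<longlonglongrightarrow> 0"
          by (intro tendsto_mult_right_zero LIMSEQ_power_zero) (use q0 in simp)
        from order_tendstoD(2)[OF t0 e] obtain K where K: "\<And>k. k \<ge> K \<Longrightarrow> B * q^k < e"
          by (auto simp: eventually_sequentially)
        show "\<forall>\<^sub>F n in sequentially. \<forall>x\<in>S. dist (zs n x) (z x) < e"
          unfolding eventually_sequentially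
        proof (intro exI allI impI ballI)
          fix n x assume n: "K \<le> n" and x: "x \<in> S"
          have "dist (zs n x) (z x) = norm (z x - zs n x)" by (simp add: dist_norm norm_minus_commute)
          also have "\<dots> \<le> B * q^n" by (rule zlim(2)[OF x])
          also have "\<dots> < e" using K n by blast
          finally show "dist (zs n x) (z x) < e" .
        qed
      qed
    qed
    show "\<forall>s\<in>S. nrm (z s) \<le> \<rho>"
    proof
      fix s assume s: "s \<in> S"
      show "nrm (z s) \<le> \<rho>"
      proof (rule LIMSEQ_le_const2)
        show "(\<lambda>n. nrm (zs n s)) \<longlonglongrightarrow> nrm (z s)" by (rule nrm_tendsto[OF nrm zlim(1)[OF s]])
        show "\<exists>N. \<forall>n\<ge>N. nrm (zs n s) \<le> \<rho>" using zgood s unfolding good_def by blast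
      qed
    qed
  qed
  have fixp: "\<Gamma> z s = z s" if s: "s \<in> S" for s
  proof -
    have "norm (zs (Suc k) s - \<Gamma> z s) \<le> (C * q * (\<rho> / (1 - q))) * q^k" for k
    proof -
      have D: "\<forall>s\<in>S. nrm (zs k s - z s) \<le> \<rho> / (1 - q) * q^k"
        using znrm nrm_basic(3)[OF nrm] by metis
      have "norm (zs (Suc k) s - \<Gamma> z s) \<le> C * nrm (\<Gamma> (zs k) s - \<Gamma> z s)"
        using C(2) by (simp add: zs_Suc)
      also have "\<dots> \<le> C * (q * (\<rho> / (1 - q) * q^k))"
        by (rule mult_left_mono[OF \<Gamma>diff[OF zgood zgood' D s]]) (use C in simp)
      finally show ?thesis by (simp add: mult.assoc)
    qed
    then have "(\<lambda>k. zs (Suc k) s) \<longlonglongrightarrow> \<Gamma> z s" by (rule geo_conv[OF _ q0])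
    moreover have "(\<lambda>k. zs (Suc k) s) \<longlonglongrightarrow> z s" by (rule LIMSEQ_Suc[OF zlim(1)[OF s]])
    ultimately show ?thesis using LIMSEQ_unique by blast
  qed
  define x where "x s = y s + z s" for s
  have GGzb: "\<forall>s\<in>S. nrm (GG z s) \<le> L * \<rho> + \<epsilon>" using GGb[OF zgood'] by blast
  have deriv: "(x has_vector_derivative (A t *v x t + f t (x t))) (at t within S)" if t: "t \<in> S" for t
  proof -
    have dL: "(Lin (GG z) has_vector_derivative (A t *v Lin (GG z) t + GG z t)) (at t within S)"
      by (rule Lin_deriv[OF GGc[OF zgood'] GGzb t])
    have dz: "(z has_vector_derivative (A t *v z t + GG z t)) (at t within S)"
    proof (rule has_vector_derivative_transform_within[OF _ zero_less_one t])
      show "(Lin (GG z) has_vector_derivative (A t *v z t + GG z t)) (at t within S)"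
        using dL fixp[OF t] by (simp add: \<Gamma>_def)
      show "\<And>x'. x' \<in> S \<Longrightarrow> dist x' t < 1 \<Longrightarrow> Lin (GG z) x' = z x'"
        using fixp by (simp add: \<Gamma>_def)
    qed
    have "(x has_vector_derivative (y' t + (A t *v z t + GG z t))) (at t within S)"
      unfolding x_def by (rule has_vector_derivative_add[OF y'(1)[OF t] dz])
    moreover have "y' t + (A t *v z t + GG z t) = A t *v x t + f t (x t)"
      by (simp add: x_def GG_def h_def matrix_vector_right_distrib algebra_simps)
    ultimately show ?thesis by simp
  qed
  show ?thesis
  proof (intro exI conjI)
    show "is_solution_on (\<lambda>t x. A t *v x + f t x) \<tau> x"
      unfolding is_solution_on_def Seq using deriv by blast
    show "\<forall>t\<in>Itau \<tau>. nrm (x t - y t) \<le> 2 * N / lam / (1 - 2 * N * L / lam) * \<epsilon>"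
      using zgood' unfolding Seq good_def x_def \<rho>_def \<kappa>_def \<beta>_def q_def by simp
  qed
qed

end

theorem theorem2:
  fixes nrm :: "real^'n \<Rightarrow> real"
    and H :: "(real^'n) set"
    and A :: "real \<Rightarrow> real^'n^'n"
    and f :: "real \<Rightarrow> real^'n \<Rightarrow> real^'n"
    and N lam \<delta> L :: real
  assumes "is_norm nrm"
    and "H \<noteq> {}"
    and "continuous_on {0..} A"
    and "continuous_on ({0..} \<times> UNIV) (\<lambda>(t, x). f t x)"
    and "exp_dichotomy nrm A N lam"
    and "0 < \<delta>" and "0 < L"
    and "\<forall>t\<ge>0. \<forall>x1\<in>nbhd_n nrm \<delta> H. \<forall>x2\<in>nbhd_n nrm \<delta> H.
           nrm (f t x1 - f t x2) \<le> L * nrm (x1 - x2)"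
    and "L < lam / (2 * N)"
  shows "cond_lipschitz_shadowing nrm (\<lambda>t x. A t *v x + f t x) H"
proof -
  note nrm = assms(1) and A_cont = assms(3) and f_cont = assms(4) and Lip = assms(8)
  have Npos: "0 < N" and lampos: "0 < lam" using assms(5) unfolding exp_dichotomy_def by auto
  obtain \<Phi> P where fm: "fundamental_matrix A \<Phi>"
    and comm: "\<forall>t\<ge>0. \<forall>s\<ge>0. P t ** (\<Phi> t ** matrix_inv (\<Phi> s)) = (\<Phi> t ** matrix_inv (\<Phi> s)) ** P s"
    and bd1: "\<forall>t s. 0 \<le> s \<and> s \<le> t \<longrightarrow> mat_norm nrm ((\<Phi> t ** matrix_inv (\<Phi> s)) ** P s) \<le> N * exp (- lam * (t - s))"
    and bd2: "\<forall>t s. 0 \<le> t \<and> t \<le> s \<longrightarrow> mat_norm nrm ((\<Phi> t ** matrix_inv (\<Phi> s)) ** (mat 1 - P s)) \<le> N * exp (- lam * (s - t))"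
    using assms(5) unfolding exp_dichotomy_def Let_def by blast
  define q where "q = 2 * N * L / lam"
  define \<kappa> where "\<kappa> = (2 * N / lam) / (1 - q)"
  have q1: "2 * N * L / lam < 1"
  proof -
    have "L * (2 * N) < lam" using assms(9) Npos by (simp add: pos_less_divide_eq)
    then show ?thesis using lampos by (simp add: divide_less_eq algebra_simps)
  qed
  have \<kappa>0: "\<kappa> > 0" using q1 Npos lampos by (simp add: \<kappa>_def q_def)
  have main: "\<exists>x. is_solution_on (\<lambda>t x. A t *v x + f t x) \<tau> x \<and> (\<forall>t\<in>Itau \<tau>. nrm (x t - y t) \<le> \<kappa> * \<epsilon>)"
    if e: "0 < \<epsilon>" "\<epsilon> \<le> \<delta> / \<kappa>" and tau: "0 < \<tau>"
      and ps: "pseudosol_le nrm (\<lambda>t x. A t *v x + f t x) \<tau> y \<epsilon>" and yH: "\<forall>t\<in>Itau \<tau>. y t \<in> H"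
    for \<epsilon> \<tau> y
  proof -
    interpret dich nrm A \<Phi> P N lam \<tau>
      by (unfold_locales) (use nrm fm comm bd1 bd2 Npos lampos tau in auto)
    have "\<kappa> * \<epsilon> \<le> \<delta>" using e \<kappa>0 by (simp add: pos_le_divide_eq mult.commute)
    then have ed: "(2 * N / lam) / (1 - 2 * N * L / lam) * \<epsilon> \<le> \<delta>"
      by (simp add: \<kappa>_def q_def)
    show ?thesis
      using shadow[OF A_cont f_cont Lip q1 assms(7) e(1) ed ps yH] unfolding \<kappa>_def q_def .
  qed
  have "0 < \<delta> / \<kappa>" using assms(6) \<kappa>0 by simp
  then show ?thesis
    unfolding cond_lipschitz_shadowing_def using \<kappa>0 main by blast
qed


end
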